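(* Suppose $R:\mathcal{A}\to\mathcal{B}$ has a monadic decomposition of monadic length $N\in\mathbb{N}$, with categories $\mathcal{B}_0=\mathcal{B},\mathcal{B}_1,\dots,\mathcal{B}_N$ and functors $R_n:\mathcal{A}\to\mathcal{B}_n$, and let $n\in\{0,\dots,N\}$. Let $U_{0,n}=U_{0,1}\circ U_{1,2}\circ\cdots\circ U_{n-1,n}:\mathcal{B}_n\to\mathcal{B}$ be the composite forgetful functor ($U_{0,0}=\mathrm{Id}$). Then: 1) $\mathrm{Im}R\subseteq\mathrm{Im}U_{0,n}$; 2) $\mathrm{Im}R=\mathrm{Im}U_{0,n}$ whenever $R_n$ is essentially surjective; 3) $\mathrm{Im}R=\mathrm{Im}U_{0,N}$.
   Context: For an adjunction $(L_n,R_n)$ with $R_n:\mathcal{A}\to\mathcal{B}_n$, unit $\eta_n$ and counit $\epsilon_n$, $\mathcal{B}_{n+1}$ is the Eilenberg–Moore category of the monad $(R_nL_n,R_n\epsilon_nL_n,\eta_n)$, $U_{n,n+1}:\mathcal{B}_{n+1}\to\mathcal{B}_n$ is its forgetful functor, and the comparison functor is $R_{n+1}:\mathcal{A}\to\mathcal{B}_{n+1}$, $R_{n+1}Y=(R_nY,R_n\epsilon_nY)$, $R_{n+1}f=R_nf$ (so $U_{n,n+1}R_{n+1}=R_n$). $R$ has a monadic decomposition of monadic length $N$ if there are functors $(R_n)_{0\le n\le N}$ with $R_0=R$, each $R_n$ having a left adjoint $L_n$, $R_{n+1}$ the comparison functor of $(L_n,R_n)$ for $n<N$, $L_N$ full and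 faithful and $L_n$ not full and faithful for $n<N$. For a functor $F:\mathcal{C}\to\mathcal{D}$, $\mathrm{Im}F$ is the full subcategory of $\mathcal{D}$ of objects isomorphic to $FC$ for some $C\in\mathcal{C}$; $F$ is essentially surjective if $\mathrm{Im}F=\mathcal{D}$. *)

theory Defs
  imports Main
begin

record ('o, 'm) cat =
  Obj :: "'o set"
  Arr :: "'m set"
  Dom :: "'m \<Rightarrow> 'o"
  Cod :: "'m \<Rightarrow> 'o"
  Idt :: "'o \<Rightarrow> 'm"
  Comp :: "'m \<Rightarrow> 'm \<Rightarrow> 'm"

definition hom :: "('o, 'm) cat \<Rightarrow> 'o \<Rightarrow> 'o \<Rightarrow> 'm set" where
  "hom C a b = {f \<in> Arr C. Dom C f = a \<and> Cod C f = b}"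

definition is_category :: "('o, 'm) cat \<Rightarrow> bool" where
  "is_category C \<longleftrightarrow>
     (\<forall>f\<in>Arr C. Dom C f \<in> Obj C \<and> Cod C f \<in> Obj C) \<and>
     (\<forall>a\<in>Obj C. Idt C a \<in> hom C a a) \<and>
     (\<forall>f\<in>Arr C. \<forall>g\<in>Arr C. Cod C f = Dom C g \<longrightarrow>
         Comp C g f \<in> hom C (Dom C f) (Cod C g)) \<and>
     (\<forall>f\<in>Arr C. Comp C (Idt C (Cod C f)) f = f \<and> Comp C f (Idt C (Dom C f)) = f) \<and>
     (\<forall>f\<in>Arr C. \<forall>g\<in>Arr C. \<forall>h\<in>Arr C. Cod C f = Dom C g \<and> Cod C g = Dom C h \<longrightarrow>
         Comp C h (Comp C g f) = Comp C (Comp C h g) f)"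

record ('o1, 'm1, 'o2, 'm2) fctr =
  FObj :: "'o1 \<Rightarrow> 'o2"
  FArr :: "'m1 \<Rightarrow> 'm2"

definition is_functor :: "('o1, 'm1) cat \<Rightarrow> ('o2, 'm2) cat \<Rightarrow> ('o1, 'm1, 'o2, 'm2) fctr \<Rightarrow> bool" where
  "is_functor C D F \<longleftrightarrow>
     is_category C \<and> is_category D \<and>
     (\<forall>a\<in>Obj C. FObj F a \<in> Obj D) \<and>
     (\<forall>f\<in>Arr C. FArr F f \<in> hom D (FObj F (Dom C f)) (FObj F (Cod C f))) \<and>
     (\<forall>a\<in>Obj C. FArr F (Idt C a) = Idt D (FObj F a)) \<and>
     (\<forall>f\<in>Arr C. \<forall>g\<in>Arr C. Cod C f = Dom C g \<longrightarrow>
         FArr F (Comp C g f) = Comp D (FArr F g) (FArr F f))"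

definition id_functor :: "('o, 'm, 'o, 'm) fctr" where
  "id_functor = \<lparr>FObj = (\<lambda>a. a), FArr = (\<lambda>f. f)\<rparr>"

definition fcomp :: "('o2, 'm2, 'o3, 'm3) fctr \<Rightarrow> ('o1, 'm1, 'o2, 'm2) fctr
                      \<Rightarrow> ('o1, 'm1, 'o3, 'm3) fctr" where
  "fcomp G F = \<lparr>FObj = FObj G \<circ> FObj F, FArr = FArr G \<circ> FArr F\<rparr>"

definition is_nat_trans :: "('o1, 'm1) cat \<Rightarrow> ('o2, 'm2) cat \<Rightarrow> ('o1, 'm1, 'o2, 'm2) fctr
     \<Rightarrow> ('o1, 'm1, 'o2, 'm2) fctr \<Rightarrow> ('o1 \<Rightarrow> 'm2) \<Rightarrow> bool" where
  "is_nat_trans C D F G \<tau> \<longleftrightarrow>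
     is_functor C D F \<and> is_functor C D G \<and>
     (\<forall>a\<in>Obj C. \<tau> a \<in> hom D (FObj F a) (FObj G a)) \<and>
     (\<forall>f\<in>Arr C. Comp D (\<tau> (Cod C f)) (FArr F f) = Comp D (FArr G f) (\<tau> (Dom C f)))"

definition is_adjunction :: "('ao, 'am) cat \<Rightarrow> ('bo, 'bm) cat
     \<Rightarrow> ('bo, 'bm, 'ao, 'am) fctr \<Rightarrow> ('ao, 'am, 'bo, 'bm) fctr
     \<Rightarrow> ('bo \<Rightarrow> 'bm) \<Rightarrow> ('ao \<Rightarrow> 'am) \<Rightarrow> bool" where
  "is_adjunction A B L R \<eta> \<epsilon> \<longleftrightarrow>
     is_functor B A L \<and> is_functor A B R \<and>
     is_nat_trans B B id_functor (fcomp R L) \<eta> \<and>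
     is_nat_trans A A (fcomp L R) id_functor \<epsilon> \<and>
     (\<forall>b\<in>Obj B. Comp A (\<epsilon> (FObj L b)) (FArr L (\<eta> b)) = Idt A (FObj L b)) \<and>
     (\<forall>a\<in>Obj A. Comp B (FArr R (\<epsilon> a)) (\<eta> (FObj R a)) = Idt B (FObj R a))"

definition iso_obj :: "('o, 'm) cat \<Rightarrow> 'o \<Rightarrow> 'o \<Rightarrow> bool" where
  "iso_obj C a b \<longleftrightarrow> (\<exists>f g. f \<in> hom C a b \<and> g \<in> hom C b a \<and>
       Comp C g f = Idt C a \<and> Comp C f g = Idt C b)"

text \<open>Objects of the essential image Im F (a full subcategory, determined by its objects).\<close>
definition ess_image :: "('o1, 'm1) cat \<Rightarrow> ('o2, 'm2) cat \<Rightarrow> ('o1, 'm1, 'o2, 'm2) fctr \<Rightarrow> 'o2 set" where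
  "ess_image C D F = {d \<in> Obj D. \<exists>c\<in>Obj C. iso_obj D d (FObj F c)}"

definition ess_surj :: "('o1, 'm1) cat \<Rightarrow> ('o2, 'm2) cat \<Rightarrow> ('o1, 'm1, 'o2, 'm2) fctr \<Rightarrow> bool" where
  "ess_surj C D F \<longleftrightarrow> ess_image C D F = Obj D"

definition fully_faithful :: "('o1, 'm1) cat \<Rightarrow> ('o2, 'm2) cat \<Rightarrow> ('o1, 'm1, 'o2, 'm2) fctr \<Rightarrow> bool" where
  "fully_faithful C D F \<longleftrightarrow>
     (\<forall>a\<in>Obj C. \<forall>b\<in>Obj C. bij_betw (FArr F) (hom C a b) (hom D (FObj F a) (FObj F b)))"

section \<open>A universe type for the tower of Eilenberg--Moore categories\<close>

datatype 'b tw = Base 'b | Pr "'b tw" "'b tw"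

definition pfst :: "'b tw \<Rightarrow> 'b tw" where
  "pfst x = (case x of Pr a b \<Rightarrow> a | Base _ \<Rightarrow> undefined)"

definition psnd :: "'b tw \<Rightarrow> 'b tw" where
  "psnd x = (case x of Pr a b \<Rightarrow> b | Base _ \<Rightarrow> undefined)"

text \<open>Eilenberg--Moore category of the monad (R L, R eps L, eta) on B.
  An algebra (b, h) is encoded as Pr b h; a morphism f : (b,h) -> (b',h') as Pr (Pr x y) f.\<close>
definition em_obj :: "('b tw, 'b tw) cat \<Rightarrow> ('b tw, 'b tw, 'ao, 'am) fctr
     \<Rightarrow> ('ao, 'am, 'b tw, 'b tw) fctr \<Rightarrow> ('b tw \<Rightarrow> 'b tw) \<Rightarrow> ('ao \<Rightarrow> 'am) \<Rightarrow> 'b tw set" where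
  "em_obj B L R \<eta> \<epsilon> = {Pr b h | b h. b \<in> Obj B \<and> h \<in> hom B (FObj R (FObj L b)) b \<and>
       Comp B h (\<eta> b) = Idt B b \<and>
       Comp B h (FArr R (FArr L h)) = Comp B h (FArr R (\<epsilon> (FObj L b)))}"

definition em_arr :: "('b tw, 'b tw) cat \<Rightarrow> ('b tw, 'b tw, 'ao, 'am) fctr
     \<Rightarrow> ('ao, 'am, 'b tw, 'b tw) fctr \<Rightarrow> ('b tw \<Rightarrow> 'b tw) \<Rightarrow> ('ao \<Rightarrow> 'am) \<Rightarrow> 'b tw set" where
  "em_arr B L R \<eta> \<epsilon> = {Pr (Pr x y) f | x y f.
       x \<in> em_obj B L R \<eta> \<epsilon> \<and> y \<in> em_obj B L R \<eta> \<epsilon> \<and>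
       f \<in> hom B (pfst x) (pfst y) \<and>
       Comp B f (psnd x) = Comp B (psnd y) (FArr R (FArr L f))}"

definition em_cat :: "('b tw, 'b tw) cat \<Rightarrow> ('b tw, 'b tw, 'ao, 'am) fctr
     \<Rightarrow> ('ao, 'am, 'b tw, 'b tw) fctr \<Rightarrow> ('b tw \<Rightarrow> 'b tw) \<Rightarrow> ('ao \<Rightarrow> 'am)
     \<Rightarrow> ('b tw, 'b tw) cat" where
  "em_cat B L R \<eta> \<epsilon> =
     \<lparr>Obj = em_obj B L R \<eta> \<epsilon>,
      Arr = em_arr B L R \<eta> \<epsilon>,
      Dom = (\<lambda>m. pfst (pfst m)),
      Cod = (\<lambda>m. psnd (pfst m)),
      Idt = (\<lambda>x. Pr (Pr x x) (Idt B (pfst x))),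
      Comp = (\<lambda>g f. Pr (Pr (pfst (pfst f)) (psnd (pfst g))) (Comp B (psnd g) (psnd f)))\<rparr>"

definition forgetful :: "('b tw, 'b tw, 'b tw, 'b tw) fctr" where
  "forgetful = \<lparr>FObj = pfst, FArr = psnd\<rparr>"

definition comparison :: "('ao, 'am) cat \<Rightarrow> ('ao, 'am, 'b tw, 'b tw) fctr \<Rightarrow> ('ao \<Rightarrow> 'am)
     \<Rightarrow> ('ao, 'am, 'b tw, 'b tw) fctr" where
  "comparison A R \<epsilon> =
     \<lparr>FObj = (\<lambda>Y. Pr (FObj R Y) (FArr R (\<epsilon> Y))),
      FArr = (\<lambda>f. Pr (Pr (Pr (FObj R (Dom A f)) (FArr R (\<epsilon> (Dom A f))))
                         (Pr (FObj R (Cod A f)) (FArr R (\<epsilon> (Cod A f)))))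
                     (FArr R f))\<rparr>"

fun U0 :: "nat \<Rightarrow> ('b tw, 'b tw, 'b tw, 'b tw) fctr" where
  "U0 0 = id_functor"
| "U0 (Suc n) = fcomp (U0 n) forgetful"

definition monadic_decomposition ::
  "('ao, 'am) cat \<Rightarrow> ('b tw, 'b tw) cat \<Rightarrow> ('ao, 'am, 'b tw, 'b tw) fctr \<Rightarrow> nat
   \<Rightarrow> (nat \<Rightarrow> ('b tw, 'b tw) cat) \<Rightarrow> (nat \<Rightarrow> ('ao, 'am, 'b tw, 'b tw) fctr)
   \<Rightarrow> (nat \<Rightarrow> ('b tw, 'b tw, 'ao, 'am) fctr) \<Rightarrow> (nat \<Rightarrow> 'b tw \<Rightarrow> 'b tw)
   \<Rightarrow> (nat \<Rightarrow> 'ao \<Rightarrow> 'am) \<Rightarrow> bool" where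
  "monadic_decomposition A B R N Bs Rs Ls etas epss \<longleftrightarrow>
     is_category A \<and> is_category B \<and> is_functor A B R \<and>
     Bs 0 = B \<and> Rs 0 = R \<and>
     (\<forall>n\<le>N. is_adjunction A (Bs n) (Ls n) (Rs n) (etas n) (epss n)) \<and>
     (\<forall>n<N. Bs (Suc n) = em_cat (Bs n) (Ls n) (Rs n) (etas n) (epss n) \<and>
            Rs (Suc n) = comparison A (Rs n) (epss n)) \<and>
     fully_faithful (Bs N) A (Ls N) \<and>
     (\<forall>n<N. \<not> fully_faithful (Bs n) A (Ls n))"

end

theory Submission
  imports Defs
begin

lemma pfst_Pr[simp]: "pfst (Pr a b) = a" by (simp add: pfst_def)
lemma psnd_Pr[simp]: "psnd (Pr a b) = b" by (simp add: psnd_def)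

lemma cat_comp: "is_category C \<Longrightarrow> f \<in> hom C a b \<Longrightarrow> g \<in> hom C b c \<Longrightarrow> Comp C g f \<in> hom C a c"
  unfolding is_category_def hom_def by auto
lemma cat_assoc: "is_category C \<Longrightarrow> f \<in> hom C a b \<Longrightarrow> g \<in> hom C b c \<Longrightarrow> h \<in> hom C c d
   \<Longrightarrow> Comp C h (Comp C g f) = Comp C (Comp C h g) f"
  unfolding is_category_def hom_def by (simp (no_asm_use)) (metis (no_types, lifting) mem_Collect_eq)
lemma cat_idl: "is_category C \<Longrightarrow> f \<in> hom C a b \<Longrightarrow> Comp C (Idt C b) f = f"
  unfolding is_category_def hom_def by auto
lemma cat_idr: "is_category C \<Longrightarrow> f \<in> hom C a b \<Longrightarrow> Comp C f (Idt C a) = f"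
  unfolding is_category_def hom_def by auto
lemma cat_id: "is_category C \<Longrightarrow> a \<in> Obj C \<Longrightarrow> Idt C a \<in> hom C a a"
  unfolding is_category_def by auto

lemma iso_trans:
  assumes C: "is_category C" and "iso_obj C a b" and "iso_obj C b c"
  shows "iso_obj C a c"
proof -
  obtain f g where f: "f \<in> hom C a b" "g \<in> hom C b a" "Comp C g f = Idt C a" "Comp C f g = Idt C b"
    using assms(2) unfolding iso_obj_def by blast
  obtain f' g' where f': "f' \<in> hom C b c" "g' \<in> hom C c b" "Comp C g' f' = Idt C b" "Comp C f' g' = Idt C c"
    using assms(3) unfolding iso_obj_def by blast
  have h1: "Comp C f' f \<in> hom C a c" using cat_comp[OF C f(1) f'(1)] .
  have h2: "Comp C g g' \<in> hom C c a" using cat_comp[OF C f'(2) f(2)] .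
  have "Comp C (Comp C g g') (Comp C f' f) = Comp C g (Comp C g' (Comp C f' f))"
    using cat_assoc[OF C h1 f'(2) f(2)] by simp
  also have "Comp C g' (Comp C f' f) = Comp C (Comp C g' f') f" using cat_assoc[OF C f(1) f'(1) f'(2)] .
  also have "\<dots> = f" using f'(3) cat_idl[OF C f(1)] by simp
  finally have e1: "Comp C (Comp C g g') (Comp C f' f) = Idt C a" using f(3) by simp
  have "Comp C (Comp C f' f) (Comp C g g') = Comp C f' (Comp C f (Comp C g g'))"
    using cat_assoc[OF C h2 f(1) f'(1)] by simp
  also have "Comp C f (Comp C g g') = Comp C (Comp C f g) g'" using cat_assoc[OF C f'(2) f(2) f(1)] .
  also have "\<dots> = g'" using f(4) cat_idl[OF C f'(2)] by simp
  finally have e2: "Comp C (Comp C f' f) (Comp C g g') = Idt C c" using f'(4) by simp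
  show ?thesis unfolding iso_obj_def using h1 h2 e1 e2 by blast
qed

lemma iso_sym: "iso_obj C a b \<Longrightarrow> iso_obj C b a"
  unfolding iso_obj_def by blast

lemma em_iso:
  assumes "iso_obj (em_cat B L R \<eta> \<epsilon>) x y"
  shows "iso_obj B (pfst x) (pfst y)"
proof -
  obtain f g where f: "f \<in> hom (em_cat B L R \<eta> \<epsilon>) x y" "g \<in> hom (em_cat B L R \<eta> \<epsilon>) y x"
    "Comp (em_cat B L R \<eta> \<epsilon>) g f = Idt (em_cat B L R \<eta> \<epsilon>) x"
    "Comp (em_cat B L R \<eta> \<epsilon>) f g = Idt (em_cat B L R \<eta> \<epsilon>) y"
    using assms unfolding iso_obj_def by blast
  have hf: "psnd f \<in> hom B (pfst x) (pfst y)"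
    using f(1) unfolding hom_def em_cat_def em_arr_def by auto
  have hg: "psnd g \<in> hom B (pfst y) (pfst x)"
    using f(2) unfolding hom_def em_cat_def em_arr_def by auto
  have "psnd (Comp (em_cat B L R \<eta> \<epsilon>) g f) = psnd (Idt (em_cat B L R \<eta> \<epsilon>) x)" using f(3) by simp
  hence e1: "Comp B (psnd g) (psnd f) = Idt B (pfst x)" by (simp add: em_cat_def)
  have "psnd (Comp (em_cat B L R \<eta> \<epsilon>) f g) = psnd (Idt (em_cat B L R \<eta> \<epsilon>) y)" using f(4) by simp
  hence e2: "Comp B (psnd f) (psnd g) = Idt B (pfst y)" by (simp add: em_cat_def)
  show ?thesis unfolding iso_obj_def using hf hg e1 e2 by blast
qed

lemma em_obj_pfst: "x \<in> Obj (em_cat B L R \<eta> \<epsilon>) \<Longrightarrow> pfst x \<in> Obj B"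
  unfolding em_cat_def em_obj_def by auto

lemma U0_Suc_obj: "FObj (U0 (Suc k)) x = FObj (U0 k) (pfst x)"
  by (simp add: fcomp_def forgetful_def)

lemma U0_0_obj: "FObj (U0 0) x = x"
  by (simp add: id_functor_def)

lemma tower:
  assumes md: "monadic_decomposition A B R N Bs Rs Ls etas epss"
  shows "k \<le> N \<Longrightarrow> (\<forall>x\<in>Obj (Bs k). FObj (U0 k) x \<in> Obj B) \<and>
      (\<forall>x y. iso_obj (Bs k) x y \<longrightarrow> iso_obj B (FObj (U0 k) x) (FObj (U0 k) y)) \<and>
      (\<forall>a\<in>Obj A. FObj (U0 k) (FObj (Rs k) a) = FObj R a)"
proof (induction k)
  case 0
  then show ?case using md unfolding monadic_decomposition_def by (simp add: id_functor_def)
next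
  case (Suc k)
  have k: "k < N" using Suc by simp
  have eqs: "Bs (Suc k) = em_cat (Bs k) (Ls k) (Rs k) (etas k) (epss k)"
    "Rs (Suc k) = comparison A (Rs k) (epss k)"
    using md k unfolding monadic_decomposition_def by blast+
  have IH: "(\<forall>x\<in>Obj (Bs k). FObj (U0 k) x \<in> Obj B) \<and>
      (\<forall>x y. iso_obj (Bs k) x y \<longrightarrow> iso_obj B (FObj (U0 k) x) (FObj (U0 k) y)) \<and>
      (\<forall>a\<in>Obj A. FObj (U0 k) (FObj (Rs k) a) = FObj R a)" using Suc by simp
  have p1: "\<forall>x\<in>Obj (Bs (Suc k)). FObj (U0 (Suc k)) x \<in> Obj B"
  proof
    fix x assume "x \<in> Obj (Bs (Suc k))"
    hence "pfst x \<in> Obj (Bs k)" unfolding eqs by (rule em_obj_pfst)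
    thus "FObj (U0 (Suc k)) x \<in> Obj B" unfolding U0_Suc_obj using IH by blast
  qed
  have p2: "\<forall>x y. iso_obj (Bs (Suc k)) x y \<longrightarrow> iso_obj B (FObj (U0 (Suc k)) x) (FObj (U0 (Suc k)) y)"
  proof (intro allI impI)
    fix x y assume "iso_obj (Bs (Suc k)) x y"
    hence "iso_obj (Bs k) (pfst x) (pfst y)" unfolding eqs by (rule em_iso)
    thus "iso_obj B (FObj (U0 (Suc k)) x) (FObj (U0 (Suc k)) y)" unfolding U0_Suc_obj using IH by blast
  qed
  have p3: "\<forall>a\<in>Obj A. FObj (U0 (Suc k)) (FObj (Rs (Suc k)) a) = FObj R a"
    unfolding U0_Suc_obj eqs using IH by (simp add: comparison_def)
  show ?case using p1 p2 p3 by blast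
qed

lemma unit_iso:
  assumes adj: "is_adjunction A B L R \<eta> \<epsilon>" and ff: "fully_faithful B A L" and b: "b \<in> Obj B"
  shows "iso_obj B b (FObj R (FObj L b))"
proof -
  have FL: "is_functor B A L" and FR: "is_functor A B R"
    and NE: "is_nat_trans B B id_functor (fcomp R L) \<eta>"
    and NC: "is_nat_trans A A (fcomp L R) id_functor \<epsilon>"
    and T1: "\<forall>b\<in>Obj B. Comp A (\<epsilon> (FObj L b)) (FArr L (\<eta> b)) = Idt A (FObj L b)"
    and T2: "\<forall>a\<in>Obj A. Comp B (FArr R (\<epsilon> a)) (\<eta> (FObj R a)) = Idt B (FObj R a)"
    using adj unfolding is_adjunction_def by blast+
  have CA: "is_category A" and CB: "is_category B" using FL unfolding is_functor_def by blast+
  note catA = CA[unfolded is_category_def] and catB = CB[unfolded is_category_def]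
  note fL = FL[unfolded is_functor_def] and fR = FR[unfolded is_functor_def]
  note nE = NE[unfolded is_nat_trans_def fcomp_def id_functor_def, simplified]
  note nC = NC[unfolded is_nat_trans_def fcomp_def id_functor_def, simplified]
  define Lb where "Lb = FObj L b"
  define RLb where "RLb = FObj R Lb"
  define e where "e = \<epsilon> Lb"
  have Lb: "Lb \<in> Obj A" using fL b Lb_def by blast
  have RLb: "RLb \<in> Obj B" using fR Lb RLb_def by blast
  have LRLb: "FObj L RLb \<in> Obj A" using fL RLb by blast
  have e: "e \<in> hom A (FObj L RLb) Lb" using nC Lb e_def RLb_def by auto
  have eta: "\<eta> b \<in> hom B b RLb" using nE b RLb_def Lb_def by auto
  have etaR: "\<eta> RLb \<in> hom B RLb (FObj R (FObj L RLb))" using nE RLb by auto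
  have bij: "bij_betw (FArr L) (hom B RLb b) (hom A (FObj L RLb) Lb)"
    using ff RLb b unfolding fully_faithful_def Lb_def by blast
  then obtain g where g: "g \<in> hom B RLb b" "FArr L g = e"
    using e unfolding bij_betw_def by (metis imageE)
  have Lg: "FArr L g \<in> hom A (FObj L RLb) Lb" using g e by simp
  have Leta: "FArr L (\<eta> b) \<in> hom A Lb (FObj L RLb)" using fL eta Lb_def unfolding hom_def by auto
  have ge: "Comp B g (\<eta> b) \<in> hom B b b" using catB g eta unfolding hom_def by auto
  have idb: "Idt B b \<in> hom B b b" using catB b by blast
  have "FArr L (Comp B g (\<eta> b)) = Comp A (FArr L g) (FArr L (\<eta> b))"
    using fL g eta unfolding hom_def by auto
  also have "\<dots> = Idt A Lb" using T1 b g(2) e_def Lb_def by simp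
  also have "\<dots> = FArr L (Idt B b)" using fL b Lb_def by simp
  finally have "FArr L (Comp B g (\<eta> b)) = FArr L (Idt B b)" .
  moreover have "inj_on (FArr L) (hom B b b)"
    using ff b unfolding fully_faithful_def bij_betw_def by blast
  ultimately have gid: "Comp B g (\<eta> b) = Idt B b" using ge idb by (meson inj_onD)
  \<comment> \<open>transposition is injective\<close>
  have transp: "\<phi> = Comp B (FArr R (Comp A e (FArr L \<phi>))) (\<eta> RLb)"
    if phi: "\<phi> \<in> hom B RLb RLb" for \<phi>
  proof -
    have Lphi: "FArr L \<phi> \<in> hom A (FObj L RLb) (FObj L RLb)" using fL phi unfolding hom_def by auto
    have RLphi: "FArr R (FArr L \<phi>) \<in> hom B (FObj R (FObj L RLb)) (FObj R (FObj L RLb))"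
      using fR Lphi unfolding hom_def by auto
    have Re: "FArr R e \<in> hom B (FObj R (FObj L RLb)) RLb" using fR e RLb_def unfolding hom_def by auto
    have "FArr R (Comp A e (FArr L \<phi>)) = Comp B (FArr R e) (FArr R (FArr L \<phi>))"
      using fR e Lphi unfolding hom_def by auto
    hence "Comp B (FArr R (Comp A e (FArr L \<phi>))) (\<eta> RLb)
        = Comp B (Comp B (FArr R e) (FArr R (FArr L \<phi>))) (\<eta> RLb)" by simp
    also have "\<dots> = Comp B (FArr R e) (Comp B (FArr R (FArr L \<phi>)) (\<eta> RLb))"
      using catB Re RLphi etaR unfolding hom_def by auto
    also have "Comp B (FArr R (FArr L \<phi>)) (\<eta> RLb) = Comp B (\<eta> RLb) \<phi>"
      using nE phi unfolding hom_def by auto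
    also have "Comp B (FArr R e) (Comp B (\<eta> RLb) \<phi>) = Comp B (Comp B (FArr R e) (\<eta> RLb)) \<phi>"
      using catB Re phi etaR unfolding hom_def by auto
    also have "Comp B (FArr R e) (\<eta> RLb) = Idt B RLb"
      using T2 Lb e_def RLb_def by simp
    also have "Comp B (Idt B RLb) \<phi> = \<phi>" using catB phi unfolding hom_def by auto
    finally show ?thesis by simp
  qed
  have h: "Comp B (\<eta> b) g \<in> hom B RLb RLb" using catB g eta unfolding hom_def by auto
  have idR: "Idt B RLb \<in> hom B RLb RLb" using catB RLb by blast
  have "Comp A e (FArr L (Comp B (\<eta> b) g)) = Comp A e (Comp A (FArr L (\<eta> b)) (FArr L g))"
    using fL g eta unfolding hom_def by auto
  also have "\<dots> = Comp A (Comp A e (FArr L (\<eta> b))) (FArr L g)"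
    using catA e Leta Lg unfolding hom_def by auto
  also have "Comp A e (FArr L (\<eta> b)) = Idt A Lb" using T1 b e_def Lb_def by simp
  also have "Comp A (Idt A Lb) (FArr L g) = e" using catA Lg g(2) unfolding hom_def by auto
  finally have t1: "Comp A e (FArr L (Comp B (\<eta> b) g)) = e" .
  have "Comp A e (FArr L (Idt B RLb)) = Comp A e (Idt A (FObj L RLb))" using fL RLb by simp
  also have "\<dots> = e" using catA e unfolding hom_def by auto
  finally have t2: "Comp A e (FArr L (Idt B RLb)) = e" .
  have hid: "Comp B (\<eta> b) g = Idt B RLb"
    using transp[OF h] transp[OF idR] t1 t2 by simp
  have "iso_obj B b RLb" unfolding iso_obj_def using eta g(1) gid hid by blast
  thus ?thesis unfolding RLb_def Lb_def .
qed

theorem proposition1p13: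
  fixes A :: "('ao, 'am) cat" and B :: "('b tw, 'b tw) cat"
    and R :: "('ao, 'am, 'b tw, 'b tw) fctr" and N n :: nat
    and Bs :: "nat \<Rightarrow> ('b tw, 'b tw) cat" and Rs :: "nat \<Rightarrow> ('ao, 'am, 'b tw, 'b tw) fctr"
    and Ls :: "nat \<Rightarrow> ('b tw, 'b tw, 'ao, 'am) fctr"
    and etas :: "nat \<Rightarrow> 'b tw \<Rightarrow> 'b tw" and epss :: "nat \<Rightarrow> 'ao \<Rightarrow> 'am"
  assumes "monadic_decomposition A B R N Bs Rs Ls etas epss"
    and "n \<le> N"
  shows "ess_image A B R \<subseteq> ess_image (Bs n) B (U0 n) \<and>
         (ess_surj A (Bs n) (Rs n) \<longrightarrow> ess_image A B R = ess_image (Bs n) B (U0 n)) \<and>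
         ess_image A B R = ess_image (Bs N) B (U0 N)"
proof -
  note md = assms(1)[unfolded monadic_decomposition_def]
  have CB: "is_category B" using md by blast
  have sub: "ess_image A B R \<subseteq> ess_image (Bs k) B (U0 k)" if k: "k \<le> N" for k
  proof
    fix d assume "d \<in> ess_image A B R"
    then obtain c where d: "d \<in> Obj B" "c \<in> Obj A" "iso_obj B d (FObj R c)"
      unfolding ess_image_def by blast
    have "is_functor A (Bs k) (Rs k)" using md k unfolding is_adjunction_def by blast
    hence "FObj (Rs k) c \<in> Obj (Bs k)" using d unfolding is_functor_def by blast
    moreover have "FObj (U0 k) (FObj (Rs k) c) = FObj R c"
      using tower[OF assms(1) k] d by blast
    ultimately have "\<exists>x\<in>Obj (Bs k). iso_obj B d (FObj (U0 k) x)" using d(3) by metis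
    thus "d \<in> ess_image (Bs k) B (U0 k)"
      using d(1) unfolding ess_image_def by blast
  qed
  have sup: "ess_image (Bs k) B (U0 k) \<subseteq> ess_image A B R"
    if k: "k \<le> N" and es: "ess_surj A (Bs k) (Rs k)" for k
  proof
    fix d assume "d \<in> ess_image (Bs k) B (U0 k)"
    then obtain x where d: "d \<in> Obj B" "x \<in> Obj (Bs k)" "iso_obj B d (FObj (U0 k) x)"
      unfolding ess_image_def by blast
    obtain c where c: "c \<in> Obj A" "iso_obj (Bs k) x (FObj (Rs k) c)"
      using es d(2) unfolding ess_surj_def ess_image_def by blast
    have T: "(\<forall>x y. iso_obj (Bs k) x y \<longrightarrow> iso_obj B (FObj (U0 k) x) (FObj (U0 k) y)) \<and>
      (\<forall>a\<in>Obj A. FObj (U0 k) (FObj (Rs k) a) = FObj R a)"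
      using tower[OF assms(1) k] by blast
    have "iso_obj B (FObj (U0 k) x) (FObj (U0 k) (FObj (Rs k) c))" using T c(2) by blast
    moreover have "FObj (U0 k) (FObj (Rs k) c) = FObj R c" using T c(1) by blast
    ultimately have i: "iso_obj B (FObj (U0 k) x) (FObj R c)" by simp
    have "iso_obj B d (FObj R c)" by (rule iso_trans[OF CB d(3) i])
    thus "d \<in> ess_image A B R" using d c unfolding ess_image_def by blast
  qed
  have esN: "ess_surj A (Bs N) (Rs N)"
    unfolding ess_surj_def
  proof
    show "ess_image A (Bs N) (Rs N) \<subseteq> Obj (Bs N)" unfolding ess_image_def by blast
  next
    have adj: "is_adjunction A (Bs N) (Ls N) (Rs N) (etas N) (epss N)" using md by blast
    have ff: "fully_faithful (Bs N) A (Ls N)" using md by blast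
    show "Obj (Bs N) \<subseteq> ess_image A (Bs N) (Rs N)"
    proof
      fix x assume x: "x \<in> Obj (Bs N)"
      have "is_functor (Bs N) A (Ls N)" using adj unfolding is_adjunction_def by (elim conjE)
      hence "FObj (Ls N) x \<in> Obj A" using x unfolding is_functor_def by (elim conjE) blast
      with unit_iso[OF adj ff x] have "\<exists>c\<in>Obj A. iso_obj (Bs N) x (FObj (Rs N) c)" by (rule bexI)
      thus "x \<in> ess_image A (Bs N) (Rs N)" using x
        unfolding ess_image_def by simp
    qed
  qed
  have "ess_image A B R = ess_image (Bs N) B (U0 N)"
    using sub[of N] sup[of N] esN by (simp add: subset_antisym)
  moreover have "ess_surj A (Bs n) (Rs n) \<longrightarrow> ess_image A B R = ess_image (Bs n) B (U0 n)"
    using sub[OF assms(2)] sup[OF assms(2)] by (simp add: subset_antisym)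
  ultimately show ?thesis using sub[OF assms(2)] by (intro conjI)
qed

end
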